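(* Let $t$ be a table with $n$ rows, and fix a predicate such that exactly $pn$ rows of $t$ satisfy it, where $p\in(0,1]$. Draw a sample of $k\ge1$ rows from $t$ uniformly at random with replacement (i.e., $k$ i.i.d. uniform draws), let $\hat X$ be the number of sampled rows satisfying the predicate, and estimate the cardinality by $\mathrm{est}=\frac{n}{k}\hat X$, the true cardinality being $\mathrm{true}=pn$. Let $\sigma^2=p(1-p)$. Then for every $q\ge1$, $$\mathbb{P}(\text{Q-error}\le q)\ \ge\ 1-\Omega-\Psi,$$ where $$\Omega=\min\Bigg(\Big(\frac{e^{q-1}}{q^{q}}\Big)^{pk},\ \exp\Big(-\frac{k(pq-p)^2}{2\sigma^2+2(pq-p)/3}\Big),\ \exp\big(-2p^2(q-1)^2k\big)\Bigg),$$ and, when $pq>1$, $$\Psi=\min\Bigg(\Big(e^{\frac1q-1}q^{\frac1q}\Big)^{pk},\ \exp\Big(-\frac{k(p-p/q)^2}{2\sigma^2+2(p-p/q)/3}\Big),\ \exp\Big(-\frac{2k(pq-1)^2}{q^2}\Big)\Bigg),$$ while, when $pq\le1$, $$\Psi=\min\Bigg(\Big(e^{\frac1q-1}q^{\frac1q}\Big)^{pk},\ \exp\Big(-\frac{k(p-p/q)^2}{2\sigma^2+2(p-p/q)/3}\Big)\Bigg).$$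
   Context: The Q-error of an estimate is $\max\big(\frac{\mathrm{true}'}{\mathrm{est}'},\frac{\mathrm{est}'}{\mathrm{true}'}\big)$, where $\mathrm{est}'=\max(\mathrm{est},1)$ and $\mathrm{true}'=\max(\mathrm{true},1)$ (to avoid division by zero). $\Omega$ bounds the probability of over-estimation ($\mathrm{est}\ge q\cdot\mathrm{true}$) and $\Psi$ the probability of under-estimation ($\mathrm{est}\le \mathrm{true}/q$). *)

theory Defs
  imports "HOL-Probability.Probability"
begin

definition qerror :: "real \<Rightarrow> real \<Rightarrow> real" where
  "qerror est tru = max (max tru 1 / max est 1) (max est 1 / max tru 1)"

text \<open>Sample of k rows drawn i.i.d. uniformly (with replacement) from the row indices
  {0..<n}: a random function from {0..<k} (draw number) to row indices.\<close>
definition sample_pmf :: "nat \<Rightarrow> nat \<Rightarrow> (nat \<Rightarrow> nat) pmf" where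
  "sample_pmf n k = Pi_pmf {..<k} 0 (\<lambda>_. pmf_of_set {..<n})"

definition Omega_bound :: "real \<Rightarrow> real \<Rightarrow> real \<Rightarrow> real" where
  "Omega_bound p q k =
     (let \<sigma>2 = p * (1 - p) in
      min ((exp (q - 1) / q powr q) powr (p * k))
        (min (exp (- (k * (p * q - p)^2) / (2 * \<sigma>2 + 2 * (p * q - p) / 3)))
             (exp (- 2 * p^2 * (q - 1)^2 * k))))"

definition Psi_bound :: "real \<Rightarrow> real \<Rightarrow> real \<Rightarrow> real" where
  "Psi_bound p q k =
     (let \<sigma>2 = p * (1 - p);
          b = min ((exp (1 / q - 1) * q powr (1 / q)) powr (p * k))
                  (exp (- (k * (p - p / q)^2) / (2 * \<sigma>2 + 2 * (p - p / q) / 3)))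
      in if p * q > 1 then min b (exp (- 2 * k * (p * q - 1)^2 / q^2)) else b)"

end

theory Submission
  imports Defs
begin


lemma fact_ge_3pow: "2 * 3 ^ m \<le> (fact (m + 2) :: real)"
proof (induction m)
  case 0 then show ?case by simp
next
  case (Suc m)
  have "fact (Suc m + 2) = real (m + 3) * (fact (m + 2) :: real)"
    by (simp add: algebra_simps)
  moreover have "real (m+3) \<ge> 3" by simp
  moreover have "3 * (2 * 3 ^ m) \<le> real (m+3) * (fact (m + 2) :: real)"
    using Suc by (intro mult_mono) auto
  ultimately show ?case by (simp only: power_Suc ac_simps)
qed

lemma exp_le_bern_pos:
  fixes x :: real assumes "0 \<le> x" "x < 3"
  shows "exp x \<le> 1 + x + x^2 / (2 * (1 - x / 3))"
proof -
  define g where "g n = (if n < 2 then x^n / fact n else x^2/2 * (x/3)^(n-2))" for n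
  have "(\<lambda>m. (x/3)^m) sums (1 / (1 - x/3))"
    by (rule geometric_sums) (use assms in auto)
  hence "(\<lambda>m. x^2/2 * (x/3)^m) sums (x^2/2 * (1 / (1 - x/3)))"
    by (rule sums_mult)
  hence "(\<lambda>m. g (m + 2)) sums (x^2/2 * (1 / (1 - x/3)))"
    by (simp add: g_def)
  hence "g sums (x^2/2 * (1 / (1 - x/3)) + (\<Sum>i<2. g i))"
    by (rule iffD1[OF sums_iff_shift])
  moreover have "(\<Sum>i<2. g i) = 1 + x"
    by (simp add: g_def eval_nat_numeral)
  moreover have "x^2/2 * (1 / (1 - x/3)) = x^2 / (2 * (1 - x / 3))" by simp
  ultimately have G: "g sums (1 + x + x^2 / (2 * (1 - x / 3)))"
    by (simp add: algebra_simps)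
  have E: "(\<lambda>n. x^n / fact n) sums exp x"
    using exp_converges[of x] by (simp add: divide_inverse mult.commute)
  have "x^n / fact n \<le> g n" for n
  proof (cases "n < 2")
    case True then show ?thesis by (simp add: g_def)
  next
    case False
    then obtain m where m: "n = m + 2" by (metis add.commute le_Suc_ex not_less)
    have "x^n / fact n \<le> x^n / (2 * 3^m)"
      using fact_ge_3pow[of m] assms m
      by (intro divide_left_mono) auto
    also have "\<dots> = x^2/2 * (x/3)^m"
      by (simp add: m power_add power_divide power2_eq_square)
    finally show ?thesis using m by (simp add: g_def)
  qed
  thus ?thesis using sums_le[OF _ E G] by blast
qed

lemma exp_le_quad_neg:
  fixes x :: real assumes "x \<le> 0"
  shows "exp x \<le> 1 + x + x^2 / 2"
proof -
  obtain t where "exp x = (\<Sum>m<3. (x ^ m) / fact m) + (exp t / fact 3) * x ^ 3"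
    using Maclaurin_exp_le[of x 3] by blast
  moreover have "x^3 \<le> 0" using assms
    by (simp add: power_le_zero_eq)
  moreover have "exp t / fact 3 \<ge> 0" by simp
  ultimately have "exp x \<le> (\<Sum>m<3. (x ^ m) / fact m)"
    by (smt (verit) mult_nonneg_nonpos)
  thus ?thesis by (simp add: eval_nat_numeral power2_eq_square)
qed

lemma exp_pointwise:
  fixes l y :: real assumes "0 \<le> l" "l < 3" "y \<le> 1"
  shows "exp (l * y) \<le> 1 + l * y + l^2 * y^2 / (2 * (1 - l / 3))"
proof (cases "l * y \<ge> 0")
  case True
  have ly: "l * y \<le> l" using assms by (simp add: mult_left_le)
  have "exp (l*y) \<le> 1 + l*y + (l*y)^2 / (2 * (1 - l*y / 3))"
    using exp_le_bern_pos[of "l*y"] True assms ly by linarith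
  also have "(l*y)^2 / (2 * (1 - l*y / 3)) \<le> l^2 * y^2 / (2 * (1 - l / 3))"
  proof -
    have "2 * (1 - l / 3) \<le> 2 * (1 - l*y / 3)" using ly by simp
    moreover have "0 < 2 * (1 - l / 3)" using assms by simp
    ultimately show ?thesis
      by (simp add: power_mult_distrib divide_left_mono)
  qed
  finally show ?thesis by simp
next
  case False
  have "exp (l*y) \<le> 1 + l*y + (l*y)^2 / 2"
    using exp_le_quad_neg False by simp
  also have "(l*y)^2 / 2 \<le> l^2 * y^2 / (2 * (1 - l / 3))"
  proof -
    have "(l*y)^2 / 2 \<le> (l*y)^2 / (2 * (1 - l / 3))"
      by (rule divide_left_mono) (use assms in auto)
    thus ?thesis by (simp add: power_mult_distrib)
  qed
  finally show ?thesis by simp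
qed



lemma binom_mgf:
  assumes "0 \<le> p" "p \<le> 1"
  shows "(\<Sum>i\<le>k. pmf (binomial_pmf k p) i * exp (l * real i)) = (p * exp l + (1 - p))^k"
proof -
  have "(\<Sum>i\<le>k. pmf (binomial_pmf k p) i * exp (l * real i))
      = (\<Sum>i\<le>k. real (k choose i) * (p * exp l)^i * (1 - p)^(k - i))"
    using assms by (intro sum.cong refl)
      (simp add: exp_of_nat_mult[symmetric] power_mult_distrib mult.commute mult.left_commute)
  also have "\<dots> = (p * exp l + (1 - p))^k"
    by (simp add: binomial_ring)
  finally show ?thesis .
qed

lemma binom_markov:
  assumes "0 \<le> p" "p \<le> 1" "\<And>i. w i \<ge> 0" "\<And>i. i \<in> S \<Longrightarrow> w i \<ge> 1"
  shows "measure_pmf.prob (binomial_pmf k p) S \<le> (\<Sum>i\<le>k. pmf (binomial_pmf k p) i * w i)"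
proof -
  let ?B = "binomial_pmf k p"
  have sub: "set_pmf ?B \<subseteq> {..k}"
    using assms by (auto simp: set_pmf_binomial_eq split: if_splits)
  have "measure_pmf.prob ?B S = measure_pmf.prob ?B (S \<inter> set_pmf ?B)"
    by (simp add: measure_Int_set_pmf)
  also have "\<dots> \<le> measure_pmf.prob ?B (S \<inter> {..k})"
    using sub by (intro measure_pmf.finite_measure_mono) auto
  also have "\<dots> = (\<Sum>i\<in>S \<inter> {..k}. pmf ?B i)"
    by (simp add: measure_measure_pmf_finite)
  also have "\<dots> \<le> (\<Sum>i\<in>S \<inter> {..k}. pmf ?B i * w i)"
  proof (intro sum_mono)
    fix i assume "i \<in> S \<inter> {..k}"
    hence "pmf ?B i * 1 \<le> pmf ?B i * w i" using assms by (intro mult_left_mono) auto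
    thus "pmf ?B i \<le> pmf ?B i * w i" by simp
  qed
  also have "\<dots> \<le> (\<Sum>i\<le>k. pmf ?B i * w i)"
    using assms by (intro sum_mono2) auto
  finally show ?thesis .
qed



lemma chern_up:
  assumes "0 \<le> p" "p \<le> 1" "q \<ge> 1"
  shows "measure_pmf.prob (binomial_pmf k p) {i. real i > q * p * k}
           \<le> (exp (q - 1) / q powr q) powr (p * k)"
proof -
  have q0: "q > 0" using assms by simp
  have lq: "ln q \<ge> 0" using assms by simp
  have "measure_pmf.prob (binomial_pmf k p) {i. real i > q * p * k}
        \<le> (\<Sum>i\<le>k. pmf (binomial_pmf k p) i * exp (ln q * (real i - q * p * k)))"
    using assms lq by (intro binom_markov) auto
  also have "\<dots> = exp (- (ln q * (q * p * k))) * (\<Sum>i\<le>k. pmf (binomial_pmf k p) i * exp (ln q * real i))"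
    unfolding sum_distrib_left
    by (intro sum.cong refl) (simp add: exp_add[symmetric] algebra_simps)
  also have "\<dots> = exp (- (ln q * (q * p * k))) * (p * q + (1 - p)) ^ k"
    by (subst binom_mgf) (use assms q0 in auto)
  also have "\<dots> \<le> exp (- (ln q * (q * p * k))) * exp (p * (q - 1)) ^ k"
  proof -
    have "p * q + (1 - p) \<le> exp (p * (q - 1))"
      using exp_ge_add_one_self[of "p * (q - 1)"] by (simp add: algebra_simps)
    moreover have "0 \<le> p * q + (1 - p)" using assms by (simp add: add_nonneg_nonneg)
    ultimately show ?thesis by (intro mult_left_mono power_mono) auto
  qed
  also have "\<dots> = exp (p * k * (q - 1 - q * ln q))"
    by (simp add: exp_of_nat_mult[symmetric] exp_add[symmetric] algebra_simps)
  also have "\<dots> = (exp (q - 1) / q powr q) powr (p * k)"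
    using q0 by (simp add: powr_def exp_diff[symmetric] ln_div mult.commute)
  finally show ?thesis .
qed

lemma chern_low:
  assumes "0 \<le> p" "p \<le> 1" "q \<ge> 1"
  shows "measure_pmf.prob (binomial_pmf k p) {i. real i < p * k / q}
           \<le> (exp (1 / q - 1) * q powr (1 / q)) powr (p * k)"
proof -
  have q0: "q > 0" using assms by simp
  have lq: "ln q \<ge> 0" using assms by simp
  have "measure_pmf.prob (binomial_pmf k p) {i. real i < p * k / q}
        \<le> (\<Sum>i\<le>k. pmf (binomial_pmf k p) i * exp (ln q * (p * k / q - real i)))"
    using assms lq by (intro binom_markov) auto
  also have "\<dots> = exp (ln q * (p * k / q)) * (\<Sum>i\<le>k. pmf (binomial_pmf k p) i * exp ((- ln q) * real i))"
    unfolding sum_distrib_left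
    by (intro sum.cong refl) (simp add: exp_add[symmetric] algebra_simps)
  also have "\<dots> = exp (ln q * (p * k / q)) * (p / q + (1 - p)) ^ k"
    by (subst binom_mgf) (use assms q0 in \<open>auto simp: exp_minus divide_inverse\<close>)
  also have "\<dots> \<le> exp (ln q * (p * k / q)) * exp (p * (1 / q - 1)) ^ k"
  proof -
    have "p / q + (1 - p) \<le> exp (p * (1 / q - 1))"
      using exp_ge_add_one_self[of "p * (1 / q - 1)"] by (simp add: algebra_simps)
    moreover have "0 \<le> p / q + (1 - p)" using assms by (simp add: add_nonneg_nonneg)
    ultimately show ?thesis by (intro mult_left_mono power_mono) auto
  qed
  also have "\<dots> = exp (p * k * (1 / q - 1 + ln q / q))"
    by (simp add: exp_of_nat_mult[symmetric] exp_add[symmetric] algebra_simps)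
  also have "\<dots> = (exp (1 / q - 1) * q powr (1 / q)) powr (p * k)"
    using q0 by (simp add: powr_def ln_mult exp_add[symmetric])
  finally show ?thesis .
qed

lemma bern_base:
  fixes p l y1 y2 :: real
  assumes "0 \<le> p" "p \<le> 1" "0 \<le> l" "l < 3" "y1 \<le> 1" "y2 \<le> 1" "p * y1 + (1 - p) * y2 = 0"
    "y1^2 * p + y2^2 * (1 - p) = p * (1 - p)"
  shows "p * exp (l * y1) + (1 - p) * exp (l * y2) \<le> exp (p * (1 - p) * l^2 / (2 * (1 - l / 3)))"
proof -
  define D where "D = 1 / (2 * (1 - l / 3))"
  have e1: "exp (l * y1) \<le> 1 + l * y1 + l^2 * y1^2 * D"
    using exp_pointwise[of l y1] assms by (simp add: D_def)
  have e2: "exp (l * y2) \<le> 1 + l * y2 + l^2 * y2^2 * D"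
    using exp_pointwise[of l y2] assms by (simp add: D_def)
  have "p * exp (l * y1) + (1 - p) * exp (l * y2)
     \<le> p * (1 + l * y1 + l^2 * y1^2 * D) + (1 - p) * (1 + l * y2 + l^2 * y2^2 * D)"
    using assms e1 e2 by (intro add_mono mult_left_mono) auto
  also have "\<dots> = 1 + l * (p * y1 + (1 - p) * y2) + l^2 * D * (y1^2 * p + y2^2 * (1 - p))"
    by (simp add: algebra_simps)
  also have "\<dots> = 1 + p * (1 - p) * l^2 * D"
    using assms by simp
  also have "\<dots> \<le> exp (p * (1 - p) * l^2 * D)"
    by (rule exp_ge_add_one_self)
  finally show ?thesis by (simp add: D_def)
qed

lemma mgf_up:
  assumes "0 \<le> p" "p \<le> 1"
  shows "(\<Sum>i\<le>k. pmf (binomial_pmf k p) i * exp (l * (real i - p * k)))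
       = (p * exp (l * (1 - p)) + (1 - p) * exp (l * (- p))) ^ k"
proof -
  have "(\<Sum>i\<le>k. pmf (binomial_pmf k p) i * exp (l * (real i - p * k)))
       = exp (- (l * p)) ^ k * (\<Sum>i\<le>k. pmf (binomial_pmf k p) i * exp (l * real i))"
    unfolding sum_distrib_left
    by (intro sum.cong refl) (simp add: exp_of_nat_mult[symmetric] exp_add[symmetric] algebra_simps)
  also have "\<dots> = (exp (- (l * p)) * (p * exp l + (1 - p))) ^ k"
    by (subst binom_mgf) (use assms in \<open>auto simp: power_mult_distrib\<close>)
  also have "exp (- (l * p)) * (p * exp l + (1 - p)) = p * exp (l * (1 - p)) + (1 - p) * exp (l * (- p))"
    by (simp add: algebra_simps exp_add[symmetric])
  finally show ?thesis .
qed

lemma mgf_low: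
  assumes "0 \<le> p" "p \<le> 1"
  shows "(\<Sum>i\<le>k. pmf (binomial_pmf k p) i * exp (l * (p * k - real i)))
       = (p * exp (l * (p - 1)) + (1 - p) * exp (l * p)) ^ k"
proof -
  have "(\<Sum>i\<le>k. pmf (binomial_pmf k p) i * exp (l * (p * k - real i)))
       = exp (l * p) ^ k * (\<Sum>i\<le>k. pmf (binomial_pmf k p) i * exp ((- l) * real i))"
    unfolding sum_distrib_left
    by (intro sum.cong refl) (simp add: exp_of_nat_mult[symmetric] exp_add[symmetric] algebra_simps)
  also have "\<dots> = (exp (l * p) * (p * exp (- l) + (1 - p))) ^ k"
    by (subst binom_mgf) (use assms in \<open>auto simp: power_mult_distrib\<close>)
  also have "exp (l * p) * (p * exp (- l) + (1 - p)) = p * exp (l * (p - 1)) + (1 - p) * exp (l * p)"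
    by (simp add: algebra_simps exp_add[symmetric])
  finally show ?thesis .
qed

lemma bern_alg:
  fixes s t k :: real
  assumes "s > 0" "t > 0"
  shows "t / (s + t / 3) < 3"
    and "k * (s * (t / (s + t / 3))^2 / (2 * (1 - t / (s + t / 3) / 3))) - t / (s + t / 3) * k * t
         = - (k * t^2) / (2 * s + 2 * t / 3)"
proof -
  define D where "D = s + t / 3"
  have d: "D > 0" using assms by (simp add: D_def)
  show "t / (s + t / 3) < 3" using d assms by (simp add: field_simps)
  have "1 - t / D / 3 = s / D" using d by (simp add: field_simps D_def)
  hence "s * (t / D)^2 / (2 * (1 - t / D / 3)) = s * (t / D)^2 / (2 * (s / D))" by simp
  also have "\<dots> = t^2 / (2 * D)"
    using d assms by (simp add: field_simps power2_eq_square)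
  finally have A: "s * (t / D)^2 / (2 * (1 - t / D / 3)) = t^2 / (2 * D)" .
  have "k * (s * (t / D)^2 / (2 * (1 - t / D / 3))) - t / D * k * t = - (k * t^2) / (2 * D)"
    unfolding A using d by (simp add: field_simps power2_eq_square)
  thus "k * (s * (t / (s + t / 3))^2 / (2 * (1 - t / (s + t / 3) / 3))) - t / (s + t / 3) * k * t
         = - (k * t^2) / (2 * s + 2 * t / 3)"
    by (simp add: D_def algebra_simps)
qed


lemma bern_up:
  assumes "0 < p" "p < 1" "q > 1"
  shows "measure_pmf.prob (binomial_pmf k p) {i. real i > q * p * k}
           \<le> exp (- (real k * (p * q - p)^2) / (2 * (p * (1 - p)) + 2 * (p * q - p) / 3))"
proof -
  define s where "s = p * (1 - p)"
  define t where "t = p * q - p"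
  define l where "l = t / (s + t / 3)"
  have s0: "s > 0" using assms by (simp add: s_def)
  have t0: "t > 0" using assms by (simp add: t_def algebra_simps)
  have l0: "l \<ge> 0" using s0 t0 by (simp add: l_def)
  have l3: "l < 3" using bern_alg(1)[OF s0 t0] by (simp add: l_def)
  have "measure_pmf.prob (binomial_pmf k p) {i. real i > q * p * k}
        \<le> (\<Sum>i\<le>k. pmf (binomial_pmf k p) i * exp (l * (real i - p * k) - l * k * t))"
  proof (rule binom_markov)
    fix i assume "i \<in> {i. real i > q * p * k}"
    hence "real i - p * k - k * t \<ge> 0" by (simp add: t_def algebra_simps)
    hence "l * (real i - p * k - k * t) \<ge> 0" using l0 by simp
    thus "1 \<le> exp (l * (real i - p * k) - l * k * t)" by (simp add: algebra_simps)
  qed (use assms in auto)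
  also have "\<dots> = exp (- (l * k * t)) * (\<Sum>i\<le>k. pmf (binomial_pmf k p) i * exp (l * (real i - p * k)))"
    unfolding sum_distrib_left
    by (intro sum.cong refl) (simp add: exp_add[symmetric] algebra_simps)
  also have "\<dots> = exp (- (l * k * t)) * (p * exp (l * (1 - p)) + (1 - p) * exp (l * (- p))) ^ k"
    by (subst mgf_up) (use assms in auto)
  also have "\<dots> \<le> exp (- (l * k * t)) * exp (p * (1 - p) * l^2 / (2 * (1 - l / 3))) ^ k"
  proof -
    have "p * exp (l * (1 - p)) + (1 - p) * exp (l * (- p)) \<le> exp (p * (1 - p) * l^2 / (2 * (1 - l / 3)))"
      using assms l0 l3 by (intro bern_base) (auto simp: algebra_simps power2_eq_square)
    moreover have "0 \<le> p * exp (l * (1 - p)) + (1 - p) * exp (l * (- p))"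
      using assms by (intro add_nonneg_nonneg mult_nonneg_nonneg) auto
    ultimately show ?thesis by (intro mult_left_mono power_mono) auto
  qed
  also have "\<dots> = exp (real k * (s * l^2 / (2 * (1 - l / 3))) - l * real k * t)"
    by (simp add: s_def exp_of_nat_mult[symmetric] exp_add[symmetric] algebra_simps)
  also have "\<dots> = exp (- (real k * t^2) / (2 * s + 2 * t / 3))"
    unfolding l_def using bern_alg(2)[OF s0 t0, of "real k"] by simp
  finally show ?thesis by (simp add: s_def t_def)
qed

lemma bern_low:
  assumes "0 < p" "p < 1" "q > 1"
  shows "measure_pmf.prob (binomial_pmf k p) {i. real i < p * k / q}
           \<le> exp (- (real k * (p - p / q)^2) / (2 * (p * (1 - p)) + 2 * (p - p / q) / 3))"
proof -
  define s where "s = p * (1 - p)"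
  define t where "t = p - p / q"
  define l where "l = t / (s + t / 3)"
  have s0: "s > 0" using assms by (simp add: s_def)
  have t0: "t > 0" using assms by (simp add: t_def field_simps)
  have l0: "l \<ge> 0" using s0 t0 by (simp add: l_def)
  have l3: "l < 3" using bern_alg(1)[OF s0 t0] by (simp add: l_def)
  have "measure_pmf.prob (binomial_pmf k p) {i. real i < p * k / q}
        \<le> (\<Sum>i\<le>k. pmf (binomial_pmf k p) i * exp (l * (p * k - real i) - l * k * t))"
  proof (rule binom_markov)
    fix i assume "i \<in> {i. real i < p * k / q}"
    hence "p * k - real i - k * t \<ge> 0" by (simp add: t_def algebra_simps)
    hence "l * (p * k - real i - k * t) \<ge> 0" using l0 by simp
    thus "1 \<le> exp (l * (p * k - real i) - l * k * t)" by (simp add: algebra_simps)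
  qed (use assms in auto)
  also have "\<dots> = exp (- (l * k * t)) * (\<Sum>i\<le>k. pmf (binomial_pmf k p) i * exp (l * (p * k - real i)))"
    unfolding sum_distrib_left
    by (intro sum.cong refl) (simp add: exp_add[symmetric] algebra_simps)
  also have "\<dots> = exp (- (l * k * t)) * (p * exp (l * (p - 1)) + (1 - p) * exp (l * p)) ^ k"
    by (subst mgf_low) (use assms in auto)
  also have "\<dots> \<le> exp (- (l * k * t)) * exp (p * (1 - p) * l^2 / (2 * (1 - l / 3))) ^ k"
  proof -
    have "p * exp (l * (p - 1)) + (1 - p) * exp (l * p) \<le> exp (p * (1 - p) * l^2 / (2 * (1 - l / 3)))"
      using assms l0 l3 by (intro bern_base) (auto simp: algebra_simps power2_eq_square)
    moreover have "0 \<le> p * exp (l * (p - 1)) + (1 - p) * exp (l * p)"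
      using assms by (intro add_nonneg_nonneg mult_nonneg_nonneg) auto
    ultimately show ?thesis by (intro mult_left_mono power_mono) auto
  qed
  also have "\<dots> = exp (real k * (s * l^2 / (2 * (1 - l / 3))) - l * real k * t)"
    by (simp add: s_def exp_of_nat_mult[symmetric] exp_add[symmetric] algebra_simps)
  also have "\<dots> = exp (- (real k * t^2) / (2 * s + 2 * t / 3))"
    unfolding l_def using bern_alg(2)[OF s0 t0, of "real k"] by simp
  finally show ?thesis by (simp add: s_def t_def)
qed

lemma hoef_up:
  assumes "0 < p" "p \<le> 1" "q \<ge> 1" "k \<ge> 1"
  shows "measure_pmf.prob (binomial_pmf k p) {i. real i > q * p * k}
           \<le> exp (- 2 * p^2 * (q - 1)^2 * real k)"
proof -
  have bd: "binomial_distribution p" using assms by (simp add: binomial_distribution_def)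
  have e: "real k * p * (q - 1) \<ge> 0" using assms by simp
  have "measure_pmf.prob (binomial_pmf k p) {i. real i > q * p * k}
        \<le> measure_pmf.prob (binomial_pmf k p) {x. real k * p + real k * p * (q - 1) \<le> real x}"
    by (intro measure_pmf.finite_measure_mono) (auto simp: algebra_simps)
  also have "\<dots> \<le> exp (- 2 * (real k * p * (q - 1))\<^sup>2 / real k)"
    using binomial_distribution.prob_ge[OF bd _ e, of k] assms by simp
  also have "\<dots> = exp (- 2 * p^2 * (q - 1)^2 * real k)"
    using assms by (simp add: power2_eq_square field_simps)
  finally show ?thesis .
qed

lemma hoef_low:
  assumes "0 < p" "p \<le> 1" "q \<ge> 1" "k \<ge> 1" "p * q > 1"
  shows "measure_pmf.prob (binomial_pmf k p) {i. real i < p * k / q}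
           \<le> exp (- 2 * real k * (p * q - 1)^2 / q^2)"
proof -
  have bd: "binomial_distribution p" using assms by (simp add: binomial_distribution_def)
  have q0: "q > 0" using assms by simp
  have "1 / q < p" using assms q0 by (simp add: field_simps)
  hence e: "real k * (p - 1 / q) \<ge> 0" using assms by simp
  have "measure_pmf.prob (binomial_pmf k p) {i. real i < p * k / q}
        \<le> measure_pmf.prob (binomial_pmf k p) {x. real x \<le> real k * p - real k * (p - 1 / q)}"
  proof (intro measure_pmf.finite_measure_mono subsetI)
    fix x assume "x \<in> {i. real i < p * k / q}"
    hence "real x < p * k / q" by simp
    also have "p * k / q \<le> k / q" using assms q0 by (simp add: divide_right_mono)
    finally show "x \<in> {x. real x \<le> real k * p - real k * (p - 1 / q)}"
      by (simp add: algebra_simps)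
  qed simp
  also have "\<dots> \<le> exp (- 2 * (real k * (p - 1 / q))\<^sup>2 / real k)"
    using binomial_distribution.prob_le[OF bd _ e, of k] assms by simp
  also have "\<dots> = exp (- 2 * real k * (p * q - 1)^2 / q^2)"
    using assms q0 by (simp add: power2_eq_square field_simps)
  finally show ?thesis .
qed

lemma p1_zero:
  assumes "S \<inter> {k} = {}"
  shows "measure_pmf.prob (binomial_pmf k 1) S = 0"
proof -
  have "measure_pmf.prob (binomial_pmf k 1) S = measure_pmf.prob (binomial_pmf k 1) (S \<inter> set_pmf (binomial_pmf k 1))"
    by (rule measure_Int_set_pmf[symmetric])
  also have "S \<inter> set_pmf (binomial_pmf k 1) = {}" using assms by simp
  finally show ?thesis by simp
qed

lemma up_bound:
  assumes "0 < p" "p \<le> 1" "q \<ge> 1" "k \<ge> 1"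
  shows "measure_pmf.prob (binomial_pmf k p) {i. real i > q * p * k} \<le> Omega_bound p q (real k)"
proof (cases "p = 1")
  case True
  have "measure_pmf.prob (binomial_pmf k p) {i. real i > q * p * k} = 0"
    unfolding True using assms by (intro p1_zero) auto
  moreover have "Omega_bound p q (real k) \<ge> 0"
    unfolding Omega_bound_def Let_def by simp
  ultimately show ?thesis by simp
next
  case False
  hence p1: "p < 1" using assms by simp
  have b2: "measure_pmf.prob (binomial_pmf k p) {i. real i > q * p * k}
        \<le> exp (- (real k * (p * q - p)^2) / (2 * (p * (1 - p)) + 2 * (p * q - p) / 3))"
  proof (cases "q = 1")
    case True thus ?thesis by simp
  next
    case False thus ?thesis using assms p1 by (intro bern_up) auto
  qed
  show ?thesis
    unfolding Omega_bound_def Let_def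
    using chern_up[of p q k] hoef_up[of p q k] b2 assms by (auto intro!: min.boundedI)
qed

lemma low_bound:
  assumes "0 < p" "p \<le> 1" "q \<ge> 1" "k \<ge> 1"
  shows "measure_pmf.prob (binomial_pmf k p) {i. real i < p * k / q} \<le> Psi_bound p q (real k)"
proof (cases "p = 1")
  case True
  have "measure_pmf.prob (binomial_pmf k p) {i. real i < p * k / q} = 0"
  proof (unfold True, intro p1_zero)
    have "real k / q \<le> real k" using assms by (simp add: divide_le_eq mult_le_cancel_left1 mult.commute)
    thus "{i. real i < 1 * real k / q} \<inter> {k} = {}" by auto
  qed
  moreover have "Psi_bound p q (real k) \<ge> 0"
    unfolding Psi_bound_def Let_def by simp
  ultimately show ?thesis by simp
next
  case False
  hence p1: "p < 1" using assms by simp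
  have b2: "measure_pmf.prob (binomial_pmf k p) {i. real i < p * k / q}
        \<le> exp (- (real k * (p - p / q)^2) / (2 * (p * (1 - p)) + 2 * (p - p / q) / 3))"
  proof (cases "q = 1")
    case True thus ?thesis by simp
  next
    case False thus ?thesis using assms p1 by (intro bern_low) auto
  qed
  show ?thesis
    unfolding Psi_bound_def Let_def
    using chern_low[of p q k] hoef_low[of p q k] b2 assms by (auto intro!: min.boundedI)
qed


lemma qerr_ok:
  fixes n k :: nat and p q x :: real
  assumes "k \<ge> 1" "p * n \<ge> 1" "q \<ge> 1" "p * k / q \<le> x" "x \<le> q * p * k"
  shows "qerror (real n / real k * x) (p * real n) \<le> q"
proof -
  define e where "e = real n / real k * x"
  have k0: "real k > 0" using assms by simp
  have q0: "q > 0" using assms by simp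
  have pn0: "p * n > 0" using assms by simp
  have "e \<ge> real n / real k * (p * k / q)"
    unfolding e_def using assms by (intro mult_left_mono) auto
  hence elo: "e \<ge> p * n / q" using k0 by (simp add: mult.commute)
  have "e \<le> real n / real k * (q * p * k)"
    unfolding e_def using assms by (intro mult_left_mono) auto
  hence ehi: "e \<le> q * (p * n)" using k0 by (simp add: ac_simps)
  have e0: "e > 0" using elo pn0 q0 by (smt (verit) divide_pos_pos)
  have m1: "max (p * n) 1 = p * n" using assms by simp
  have qpn: "q * (p * n) \<ge> 1" using assms
    by (metis mult_le_cancel_right1 mult.commute order.trans pn0 less_eq_real_def)
  have r1: "max e 1 / (p * n) \<le> q"
    using ehi qpn pn0 by (simp add: divide_le_eq mult.commute)
  have "p * n / max e 1 \<le> p * n / e"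
    using e0 pn0 by (intro divide_left_mono) auto
  also have "\<dots> \<le> q" using elo e0 q0 by (simp add: divide_le_eq mult.commute)
  finally have r2: "p * n / max e 1 \<le> q" .
  show ?thesis unfolding qerror_def e_def[symmetric] m1 using r1 r2 by simp
qed

lemma sample_binomial:
  fixes t :: "nat \<Rightarrow> 'r" and P :: "'r \<Rightarrow> bool"
  assumes "n \<ge> 1" "real (card {i \<in> {..<n}. P (t i)}) = p * real n" "0 \<le> p" "p \<le> 1"
  shows "map_pmf (\<lambda>s. card {j \<in> {..<k}. P (t (s j))}) (sample_pmf n k) = binomial_pmf k p"
proof -
  define f where "f = (\<lambda>i. P (t i))"
  have ne: "{..<n} \<noteq> {}" using assms(1) by (simp add: lessThan_empty_iff)
  have bern: "map_pmf f (pmf_of_set {..<n}) = bernoulli_pmf p"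
  proof (intro pmf_eqI)
    fix b :: bool
    have "pmf (map_pmf f (pmf_of_set {..<n})) b = real (card ({..<n} \<inter> f -` {b})) / real n"
      using ne by (simp add: pmf_map measure_pmf_of_set)
    also have "\<dots> = pmf (bernoulli_pmf p) b"
    proof (cases b)
      case True
      have "{..<n} \<inter> f -` {b} = {i \<in> {..<n}. P (t i)}" using True by (auto simp: f_def)
      thus ?thesis using True assms by simp
    next
      case False
      have "{..<n} \<inter> f -` {b} = {..<n} - {i \<in> {..<n}. P (t i)}" using False by (auto simp: f_def)
      hence "card ({..<n} \<inter> f -` {b}) = card {..<n} - card {i \<in> {..<n}. P (t i)}"
        by (metis (no_types, lifting) card_Diff_subset finite_subset finite_lessThan mem_Collect_eq subsetI lessThan_iff)
      hence "card ({..<n} \<inter> f -` {b}) = n - card {i \<in> {..<n}. P (t i)}" by simp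
      moreover have "card {i \<in> {..<n}. P (t i)} \<le> n"
        by (metis (no_types, lifting) card_lessThan card_mono finite_lessThan mem_Collect_eq subsetI lessThan_iff)
      ultimately have "real (card ({..<n} \<inter> f -` {b})) = real n - p * real n"
        using assms by (simp add: of_nat_diff)
      thus ?thesis using False assms by (simp add: field_simps)
    qed
    finally show "pmf (map_pmf f (pmf_of_set {..<n})) b = pmf (bernoulli_pmf p) b" .
  qed
  have "map_pmf (\<lambda>s. card {j \<in> {..<k}. P (t (s j))}) (sample_pmf n k)
      = map_pmf (\<lambda>v. card {x \<in> {..<k}. v x}) (map_pmf ((\<circ>) f) (Pi_pmf {..<k} 0 (\<lambda>_. pmf_of_set {..<n})))"
    by (simp add: sample_pmf_def map_pmf_comp f_def)
  also have "map_pmf ((\<circ>) f) (Pi_pmf {..<k} 0 (\<lambda>_. pmf_of_set {..<n}))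
      = Pi_pmf {..<k} (f 0) (\<lambda>_. map_pmf f (pmf_of_set {..<n}))"
    by (rule Pi_pmf_map[symmetric]) auto
  also have "\<dots> = Pi_pmf {..<k} (f 0) (\<lambda>_. bernoulli_pmf p)" by (simp add: bern)
  also have "map_pmf (\<lambda>v. card {x \<in> {..<k}. v x}) \<dots> = binomial_pmf k p"
    by (rule binomial_pmf_altdef'[symmetric]) (use assms in auto)
  finally show ?thesis .
qed

theorem theorem3:
  fixes t :: "nat \<Rightarrow> 'r" and P :: "'r \<Rightarrow> bool"
    and n k :: nat and p q :: real
  assumes "n \<ge> 1"
    and "real (card {i \<in> {..<n}. P (t i)}) = p * real n"
    and "0 < p" and "p \<le> 1"
    and "k \<ge> 1"
    and "q \<ge> 1"
  shows "measure_pmf.prob (sample_pmf n k)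
           {s. qerror (real n / real k * real (card {j \<in> {..<k}. P (t (s j))})) (p * real n) \<le> q}
         \<ge> 1 - Omega_bound p q (real k) - Psi_bound p q (real k)"
proof -
  define X where "X = (\<lambda>s. card {j \<in> {..<k}. P (t (s j))})"
  define M where "M = sample_pmf n k"
  define G where "G = {s. qerror (real n / real k * real (X s)) (p * real n) \<le> q}"
  define U where "U = {s. real (X s) > q * p * k}"
  define L where "L = {s. real (X s) < p * k / q}"
  have pn: "p * n \<ge> 1"
  proof -
    have "p * n > 0" using assms by simp
    hence "card {i \<in> {..<n}. P (t i)} > 0" using assms(2) by simp
    hence "real (card {i \<in> {..<n}. P (t i)}) \<ge> 1" by simp
    thus ?thesis using assms(2) by simp
  qed
  have cov: "UNIV = U \<union> L \<union> G"
  proof -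
    have "s \<in> G" if "s \<notin> U" "s \<notin> L" for s
      using that qerr_ok[of k p n q "real (X s)"] assms pn
      by (auto simp: U_def L_def G_def not_less)
    thus ?thesis by blast
  qed
  have mapB: "map_pmf X M = binomial_pmf k p"
    unfolding X_def M_def using assms by (intro sample_binomial) auto
  have PU: "measure_pmf.prob M U = measure_pmf.prob (binomial_pmf k p) {i. real i > q * p * k}"
    unfolding mapB[symmetric] by (simp add: U_def vimage_def)
  have PL: "measure_pmf.prob M L = measure_pmf.prob (binomial_pmf k p) {i. real i < p * k / q}"
    unfolding mapB[symmetric] by (simp add: L_def vimage_def)
  have "1 = measure_pmf.prob M (U \<union> L \<union> G)"
    unfolding cov[symmetric] by simp
  also have "\<dots> \<le> measure_pmf.prob M (U \<union> L) + measure_pmf.prob M G"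
    by (rule measure_Un_le) auto
  also have "measure_pmf.prob M (U \<union> L) \<le> measure_pmf.prob M U + measure_pmf.prob M L"
    by (rule measure_Un_le) auto
  finally have "1 \<le> measure_pmf.prob M U + measure_pmf.prob M L + measure_pmf.prob M G"
    by simp
  moreover have "measure_pmf.prob M U \<le> Omega_bound p q (real k)"
    unfolding PU using up_bound assms by auto
  moreover have "measure_pmf.prob M L \<le> Psi_bound p q (real k)"
    unfolding PL using low_bound assms by auto
  ultimately show ?thesis unfolding M_def G_def X_def by simp
qed

end
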